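(* Fix a constant $\epsilon\in(0,1)$. For every directed graph $G=(V,E)$ on $n$ nodes, every state $\mathcal{S}$ with no red nodes, and every integer $k$ with $1\le k\le|V\setminus\mathcal{S}^b|$, the set $A$ returned by the Monte Carlo Greedy Algorithm satisfies, with probability $1-o(1)$ as $n\to\infty$ (uniformly over $G,\mathcal{S},k$), $\mathcal{F}_{\mathcal{S}}(A)\ge\left(1-\frac1e-\epsilon\right)\max\{\mathcal{F}_{\mathcal{S}}(A'):|A'|\le k,\ A'\cap\mathcal{S}^b=\emptyset\}$.
   Context: A state is a map $\mathcal{S}:V\to\{b,r,u\}$ (blue, red, uncolored); colored means blue or red; $\mathcal{S}^b$ is the set of blue nodes. The \textsc{Random Pick} process: in each round every node $v$ with at least one out-neighbor picks an out-neighbor $ps_t(v)$ uniformly at random, independently; $\mathcal{S}_t(v)=\mathcal{S}_{t-1}(ps_t(v))$ if $\mathcal{S}_{t-1}(v)=u$ and $\mathcal{S}_{t-1}(ps_t(v))\ne u$, else $\mathcal{S}_t(v)=\mathcal{S}_{t-1}(v)$; it almost surely reaches a stable state (no uncolored node has a colored out-neighbor). $\mathcal{F}_{\mathcal{S}}(A)$ is the expected number of red nodes in the final stable state when starting from $\mathcal{S}$ with the nodes of $A\subseteq V\setminus\mathcal{S}^b$ recolored red. Monte Carlo Greedy Algorithm: let $R=\lceil 27nk^2\ln(n^3)/\epsilon^2\rceil$; for a set $B$, $Est_{\mathcal{S}}(B)$ is the average, over $R$ independent simulations of the process run to its stable state from $\mathcal{S}$ with $B$ recolored red, of the final number of red nodes.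 Start with $A=\emptyset$; for $i=1,\dots,k$, choose $v\in(V\setminus\mathcal{S}^b)\setminus A$ maximizing $Est_{\mathcal{S}}(A\cup\{v\})$ (ties broken arbitrarily, fresh independent simulations for each evaluation) and set $A\leftarrow A\cup\{v\}$; return $A$. *)

theory Defs
  imports "HOL-Probability.Probability"
begin

datatype color = Blue | Red | Unc

type_synonym state = "nat \<Rightarrow> color"

text \<open>A directed graph on n nodes has vertex set {..<n} and edge relation
  E \<subseteq> {..<n} \<times> {..<n}.  out-neighbours of v:\<close>
definition out_nbrs :: "(nat \<times> nat) set \<Rightarrow> nat \<Rightarrow> nat set" where
  "out_nbrs E v = {w. (v, w) \<in> E}"

definition blue_set :: "nat \<Rightarrow> state \<Rightarrow> nat set" where
  "blue_set n S = {v \<in> {..<n}. S v = Blue}"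

definition red_count :: "nat \<Rightarrow> state \<Rightarrow> real" where
  "red_count n S = real (card {v \<in> {..<n}. S v = Red})"

definition recolor :: "state \<Rightarrow> nat set \<Rightarrow> state" where
  "recolor S A = (\<lambda>v. if v \<in> A then Red else S v)"

definition pick_pmf :: "nat \<Rightarrow> (nat \<times> nat) set \<Rightarrow> (nat \<Rightarrow> nat) pmf" where
  "pick_pmf n E = Pi_pmf {v \<in> {..<n}. out_nbrs E v \<noteq> {}} 0 (\<lambda>v. pmf_of_set (out_nbrs E v))"

definition step_pmf :: "nat \<Rightarrow> (nat \<times> nat) set \<Rightarrow> state \<Rightarrow> state pmf" where
  "step_pmf n E S = map_pmf
     (\<lambda>p v. if v < n \<and> out_nbrs E v \<noteq> {} \<and> S v = Unc \<and> S (p v) \<noteq> Unc then S (p v) else S v)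
     (pick_pmf n E)"

definition run_pmf :: "nat \<Rightarrow> (nat \<times> nat) set \<Rightarrow> nat \<Rightarrow> state \<Rightarrow> state pmf" where
  "run_pmf n E t S = ((\<lambda>M. bind_pmf M (step_pmf n E)) ^^ t) (return_pmf S)"

text \<open>Distribution of the final (stable) state: the process almost surely gets
  absorbed in a stable state, so the t-round distributions converge pointwise.\<close>
definition final_pmf :: "nat \<Rightarrow> (nat \<times> nat) set \<Rightarrow> state \<Rightarrow> state pmf" where
  "final_pmf n E S = embed_pmf (\<lambda>s. lim (\<lambda>t. pmf (run_pmf n E t S) s))"

definition F :: "nat \<Rightarrow> (nat \<times> nat) set \<Rightarrow> state \<Rightarrow> nat set \<Rightarrow> real" where
  "F n E S A = measure_pmf.expectation (final_pmf n E (recolor S A)) (red_count n)"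

definition OPT :: "nat \<Rightarrow> (nat \<times> nat) set \<Rightarrow> state \<Rightarrow> nat \<Rightarrow> real" where
  "OPT n E S k = Max {F n E S A' | A'. A' \<subseteq> {..<n} \<and> card A' \<le> k \<and> A' \<inter> blue_set n S = {}}"

definition num_sims :: "nat \<Rightarrow> nat \<Rightarrow> real \<Rightarrow> nat" where
  "num_sims n k \<epsilon> = nat \<lceil>27 * real n * real k ^ 2 * ln (real n ^ 3) / \<epsilon> ^ 2\<rceil>"

definition est_pmf :: "nat \<Rightarrow> (nat \<times> nat) set \<Rightarrow> state \<Rightarrow> nat \<Rightarrow> nat set \<Rightarrow> real pmf" where
  "est_pmf n E S R B = map_pmf (\<lambda>xs. (\<Sum>i<R. red_count n (xs i)) / real R)
     (Pi_pmf {..<R} (\<lambda>_. Unc) (\<lambda>_. final_pmf n E (recolor S B)))"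

definition valid_tiebreak :: "nat set \<Rightarrow> (nat set \<Rightarrow> (nat \<Rightarrow> real) \<Rightarrow> nat) \<Rightarrow> bool" where
  "valid_tiebreak C tb = (\<forall>A e. C - A \<noteq> {} \<longrightarrow>
      tb A e \<in> C - A \<and> (\<forall>w \<in> C - A. e w \<le> e (tb A e)))"

definition greedy_step :: "nat \<Rightarrow> (nat \<times> nat) set \<Rightarrow> state \<Rightarrow> nat \<Rightarrow>
    (nat set \<Rightarrow> (nat \<Rightarrow> real) \<Rightarrow> nat) \<Rightarrow> nat set \<Rightarrow> nat set pmf" where
  "greedy_step n E S R tb A =
     map_pmf (\<lambda>e. A \<union> {tb A e})
       (Pi_pmf (({..<n} - blue_set n S) - A) 0 (\<lambda>v. est_pmf n E S R (A \<union> {v})))"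

definition greedy_pmf :: "nat \<Rightarrow> (nat \<times> nat) set \<Rightarrow> state \<Rightarrow> nat \<Rightarrow> real \<Rightarrow>
    (nat set \<Rightarrow> (nat \<Rightarrow> real) \<Rightarrow> nat) \<Rightarrow> nat set pmf" where
  "greedy_pmf n E S k \<epsilon> tb =
     ((\<lambda>M. bind_pmf M (greedy_step n E S (num_sims n k \<epsilon>) tb)) ^^ k) (return_pmf {})"

end

theory Submission
  imports Defs
begin

definition stepD :: "nat \<Rightarrow> (nat \<times> nat) set \<Rightarrow> (nat \<Rightarrow> nat) \<Rightarrow> state \<Rightarrow> state" where
  "stepD n E p S = (\<lambda>v. if v < n \<and> out_nbrs E v \<noteq> {} \<and> S v = Unc \<and> S (p v) \<noteq> Unc then S (p v) else S v)"

definition runD :: "nat \<Rightarrow> (nat \<times> nat) set \<Rightarrow> (nat \<Rightarrow> nat) list \<Rightarrow> state \<Rightarrow> state" where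
  "runD n E ps S = foldl (\<lambda>S p. stepD n E p S) S ps"

definition monoR :: "state \<Rightarrow> state \<Rightarrow> bool" where
  "monoR a b = ((\<forall>w. a w = Red \<longrightarrow> b w = Red) \<and> (\<forall>w. b w = Blue \<longrightarrow> a w = Blue) \<and> (\<forall>w. a w \<noteq> Unc \<longrightarrow> b w \<noteq> Unc))"

lemma color_cases: "c = Blue \<or> c = Red \<or> c = Unc"
  by (cases c) auto

lemma monoR_step: "monoR a b \<Longrightarrow> monoR (stepD n E p a) (stepD n E p b)"
  unfolding monoR_def stepD_def
  by (smt (verit) color.distinct color_cases)

definition unionR :: "state \<Rightarrow> state \<Rightarrow> state \<Rightarrow> bool" where
  "unionR a b c = (monoR a c \<and> monoR b c \<and> (\<forall>w. c w = Red \<longrightarrow> a w = Red \<or> b w = Red))"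

lemma unionR_step: "unionR a b c \<Longrightarrow> unionR (stepD n E p a) (stepD n E p b) (stepD n E p c)"
  unfolding unionR_def
  apply (intro conjI monoR_step, simp_all)
  unfolding monoR_def stepD_def
  by (smt (verit) color.distinct color_cases)

lemma runD_Nil[simp]: "runD n E [] S = S" by (simp add: runD_def)
lemma runD_snoc: "runD n E (ps @ [p]) S = stepD n E p (runD n E ps S)"
  by (simp add: runD_def)

lemma monoR_run: "monoR a b \<Longrightarrow> monoR (runD n E ps a) (runD n E ps b)"
  by (induction ps rule: rev_induct) (auto simp: runD_snoc monoR_step)

lemma unionR_run: "unionR a b c \<Longrightarrow> unionR (runD n E ps a) (runD n E ps b) (runD n E ps c)"
  by (induction ps rule: rev_induct) (auto simp: runD_snoc unionR_step)

lemma monoR_recolor: "X \<subseteq> Y \<Longrightarrow> monoR (recolor S X) (recolor S Y)"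
  unfolding monoR_def recolor_def by auto

lemma unionR_recolor: "unionR (recolor S X) (recolor S Y) (recolor S (X \<union> Y))"
  unfolding unionR_def using monoR_recolor[of X "X \<union> Y" S] monoR_recolor[of Y "X \<union> Y" S]
  by (auto simp: recolor_def)

lemma stepD_outside: "\<not> v < n \<Longrightarrow> stepD n E p S v = S v"
  by (simp add: stepD_def)
lemma runD_outside: "\<not> v < n \<Longrightarrow> runD n E ps S v = S v"
  by (induction ps rule: rev_induct) (auto simp: runD_snoc stepD_outside)

lemma runD_red: "S v = Red \<Longrightarrow> runD n E ps S v = Red"
  by (induction ps rule: rev_induct) (auto simp: runD_snoc stepD_def)

primrec picks :: "nat \<Rightarrow> (nat \<times> nat) set \<Rightarrow> nat \<Rightarrow> (nat \<Rightarrow> nat) list pmf" where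
  "picks n E 0 = return_pmf []"
| "picks n E (Suc t) = bind_pmf (picks n E t) (\<lambda>ps. map_pmf (\<lambda>p. ps @ [p]) (pick_pmf n E))"

lemma step_pmf_eq: "step_pmf n E S = map_pmf (\<lambda>p. stepD n E p S) (pick_pmf n E)"
  unfolding step_pmf_def stepD_def by simp

lemma run_pmf_0: "run_pmf n E 0 S = return_pmf S"
  by (simp add: run_pmf_def)

lemma run_pmf_Suc: "run_pmf n E (Suc t) S = bind_pmf (run_pmf n E t S) (step_pmf n E)"
  by (simp add: run_pmf_def)

lemma run_picks: "run_pmf n E t S = map_pmf (\<lambda>ps. runD n E ps S) (picks n E t)"
proof (induction t)
  case 0
  then show ?case by (simp add: run_pmf_0)
next
  case (Suc t)
  show ?case
    by (simp add: run_pmf_Suc Suc bind_map_pmf map_bind_pmf map_pmf_comp step_pmf_eq runD_snoc)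
qed

definition leq :: "state \<Rightarrow> state \<Rightarrow> bool" where
  "leq a b = (\<forall>v. a v \<noteq> Unc \<longrightarrow> b v = a v)"

lemma leq_trans: "leq a b \<Longrightarrow> leq b c \<Longrightarrow> leq a c"
  unfolding leq_def by metis
lemma leq_antisym: "leq a b \<Longrightarrow> leq b a \<Longrightarrow> a = b"
  unfolding leq_def by (rule ext) (metis)
lemma leq_stepD: "leq S (stepD n E p S)"
  unfolding leq_def stepD_def by auto

lemma set_step_pmf: "y \<in> set_pmf (step_pmf n E x) \<Longrightarrow> leq x y"
  by (auto simp: step_pmf_eq leq_stepD)

lemma prob_bind_mono:
  assumes "\<And>x y. x \<in> set_pmf M \<Longrightarrow> x \<in> U \<Longrightarrow> y \<in> set_pmf (f x) \<Longrightarrow> y \<in> U"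
  shows "measure_pmf.prob M U \<le> measure_pmf.prob (bind_pmf M f) U"
proof -
  have "emeasure (measure_pmf M) U = (\<integral>\<^sup>+x. indicator U x \<partial>M)"
    by simp
  also have "\<dots> \<le> (\<integral>\<^sup>+x. emeasure (f x) U \<partial>M)"
  proof (rule nn_integral_mono_AE, rule AE_pmfI)
    fix x assume x: "x \<in> set_pmf M"
    show "indicator U x \<le> emeasure (measure_pmf (f x)) U"
    proof (cases "x \<in> U")
      case True
      have "emeasure (measure_pmf (f x)) U = 1"
        using assms[OF x True]
        by (subst measure_pmf.emeasure_eq_1_AE) (auto intro!: AE_pmfI)
      then show ?thesis using True by simp
    qed simp
  qed
  also have "\<dots> = emeasure (bind_pmf M f) U" by simp
  finally show ?thesis
    by (simp add: measure_pmf.emeasure_eq_measure)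
qed

definition upc :: "state set \<Rightarrow> bool" where
  "upc U = (\<forall>x y. x \<in> U \<longrightarrow> leq x y \<longrightarrow> y \<in> U)"

lemma run_upc_mono:
  assumes "upc U"
  shows "incseq (\<lambda>t. measure_pmf.prob (run_pmf n E t S) U)"
proof (rule incseq_SucI)
  fix t
  show "measure_pmf.prob (run_pmf n E t S) U \<le> measure_pmf.prob (run_pmf n E (Suc t) S) U"
    unfolding run_pmf_Suc
    by (rule prob_bind_mono) (use assms set_step_pmf in \<open>auto simp: upc_def\<close>)
qed

lemma conv_incseq_prob:
  fixes f :: "nat \<Rightarrow> real"
  assumes "incseq f" "\<And>t. f t \<le> 1"
  shows "convergent f"
proof -
  have "bdd_above (range f)" using assms(2) by (auto intro!: bdd_aboveI)
  then show ?thesis using LIMSEQ_incseq_SUP[OF _ assms(1)] convergentI by blast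
qed

lemma pmf_run_convergent: "convergent (\<lambda>t. pmf (run_pmf n E t S) s)"
proof -
  define U1 where "U1 = {x. leq s x}"
  define U2 where "U2 = {x. leq s x \<and> x \<noteq> s}"
  have u1: "upc U1" unfolding upc_def U1_def using leq_trans by blast
  have u2: "upc U2" unfolding upc_def U2_def using leq_trans leq_antisym by blast
  have eq: "pmf (run_pmf n E t S) s = measure_pmf.prob (run_pmf n E t S) U1 - measure_pmf.prob (run_pmf n E t S) U2" for t
  proof -
    have "U1 = insert s U2" "s \<notin> U2" unfolding U1_def U2_def by (auto simp: leq_def)
    then have "U1 = {s} \<union> U2" "{s} \<inter> U2 = {}" by auto
    then show ?thesis
      using measure_pmf.finite_measure_Union[of "{s}" "run_pmf n E t S" U2]
      by (simp add: measure_pmf_single del: insert_is_Un)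
  qed
  have c1: "convergent (\<lambda>t. measure_pmf.prob (run_pmf n E t S) U1)"
    by (rule conv_incseq_prob[OF run_upc_mono[OF u1]]) simp
  have c2: "convergent (\<lambda>t. measure_pmf.prob (run_pmf n E t S) U2)"
    by (rule conv_incseq_prob[OF run_upc_mono[OF u2]]) simp
  show ?thesis unfolding eq using c1 c2 by (rule convergent_diff)
qed

definition Omega :: "nat \<Rightarrow> state \<Rightarrow> state set" where
  "Omega n S = {x. \<forall>v. \<not> v < n \<longrightarrow> x v = S v}"

lemma finite_color: "finite (UNIV :: color set)"
proof -
  have "UNIV = {Blue, Red, Unc}" using color_cases by blast
  then show ?thesis by (metis finite.emptyI finite.insertI)
qed

lemma finite_Omega: "finite (Omega n S)"
proof -
  have "Omega n S \<subseteq> (\<lambda>f v. if v < n then f v else S v) ` (PiE {..<n} (\<lambda>_. UNIV))"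
  proof
    fix x assume x: "x \<in> Omega n S"
    show "x \<in> (\<lambda>f v. if v < n then f v else S v) ` (PiE {..<n} (\<lambda>_. UNIV))"
      by (rule image_eqI[of _ _ "restrict x {..<n}"]) (use x in \<open>auto simp: Omega_def\<close>)
  qed
  moreover have "finite (PiE {..<n} (\<lambda>_. UNIV :: color set))"
    by (intro finite_PiE) (auto simp: finite_color)
  ultimately show ?thesis by (meson finite_surj)
qed

lemma set_run_Omega: "set_pmf (run_pmf n E t S) \<subseteq> Omega n S"
  by (auto simp: run_picks Omega_def runD_outside)

definition Lim :: "nat \<Rightarrow> (nat \<times> nat) set \<Rightarrow> state \<Rightarrow> state \<Rightarrow> real" where
  "Lim n E S s = lim (\<lambda>t. pmf (run_pmf n E t S) s)"

lemma Lim_tendsto: "(\<lambda>t. pmf (run_pmf n E t S) s) \<longlonglongrightarrow> Lim n E S s"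
  unfolding Lim_def using pmf_run_convergent convergent_LIMSEQ_iff by blast

lemma Lim_nonneg: "0 \<le> Lim n E S s"
  by (rule LIMSEQ_le_const[OF Lim_tendsto]) simp

lemma Lim_outside: "s \<notin> Omega n S \<Longrightarrow> Lim n E S s = 0"
proof -
  assume s: "s \<notin> Omega n S"
  have "pmf (run_pmf n E t S) s = 0" for t
    using set_run_Omega s by (meson pmf_eq_0_set_pmf subsetD)
  then have "(\<lambda>t. pmf (run_pmf n E t S) s) \<longlonglongrightarrow> 0" by simp
  then show ?thesis using Lim_tendsto LIMSEQ_unique by blast
qed

lemma Lim_sum: "(\<Sum>s\<in>Omega n S. Lim n E S s) = 1"
proof -
  have "(\<lambda>t. \<Sum>s\<in>Omega n S. pmf (run_pmf n E t S) s) \<longlonglongrightarrow> (\<Sum>s\<in>Omega n S. Lim n E S s)"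
    by (intro tendsto_sum Lim_tendsto)
  moreover have "(\<Sum>s\<in>Omega n S. pmf (run_pmf n E t S) s) = 1" for t
    by (rule sum_pmf_eq_1[OF finite_Omega set_run_Omega])
  ultimately have "(\<lambda>t. 1::real) \<longlonglongrightarrow> (\<Sum>s\<in>Omega n S. Lim n E S s)" by simp
  then show ?thesis using LIMSEQ_unique tendsto_const by metis
qed

lemma final_pmf_pmf: "pmf (final_pmf n E S) s = Lim n E S s"
proof -
  have "(\<integral>\<^sup>+x. ennreal (Lim n E S x) \<partial>count_space UNIV) = (\<Sum>x\<in>Omega n S. ennreal (Lim n E S x))"
    by (rule nn_integral_count_space') (auto simp: finite_Omega Lim_outside)
  also have "\<dots> = ennreal (\<Sum>x\<in>Omega n S. Lim n E S x)"
    by (rule sum_ennreal) (simp add: Lim_nonneg)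
  also have "\<dots> = 1" by (simp add: Lim_sum)
  finally have "(\<integral>\<^sup>+x. ennreal (Lim n E S x) \<partial>count_space UNIV) = 1" .
  then show ?thesis
    unfolding final_pmf_def Lim_def[symmetric]
    by (rule pmf_embed_pmf[OF Lim_nonneg])
qed

lemma set_final_Omega: "set_pmf (final_pmf n E S) \<subseteq> Omega n S"
  using final_pmf_pmf Lim_outside by (metis set_pmf_eq' mem_Collect_eq subsetI less_irrefl)

lemma expect_final_tendsto:
  "(\<lambda>t. measure_pmf.expectation (run_pmf n E t S) f) \<longlonglongrightarrow> measure_pmf.expectation (final_pmf n E S) (f::state\<Rightarrow>real)"
proof -
  have e1: "measure_pmf.expectation (run_pmf n E t S) f = (\<Sum>s\<in>Omega n S. f s * pmf (run_pmf n E t S) s)" for t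
    by (rule integral_measure_pmf_real) (use set_run_Omega[of n E t S] finite_Omega in auto)
  have e2: "measure_pmf.expectation (final_pmf n E S) f = (\<Sum>s\<in>Omega n S. f s * Lim n E S s)"
    unfolding final_pmf_pmf[symmetric]
    by (rule integral_measure_pmf_real) (use set_final_Omega[of n E S] finite_Omega in auto)
  show ?thesis unfolding e1 e2
    by (intro tendsto_sum tendsto_mult tendsto_const Lim_tendsto)
qed

lemma int_bounded: "(\<And>x. \<bar>f x\<bar> \<le> B) \<Longrightarrow> integrable (measure_pmf M) (f :: _ \<Rightarrow> real)"
  by (rule measure_pmf.integrable_const_bound[where B=B]) auto

definition redset :: "nat \<Rightarrow> state \<Rightarrow> nat set" where
  "redset n s = {v \<in> {..<n}. s v = Red}"

lemma red_count_redset: "red_count n s = real (card (redset n s))"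
  by (simp add: red_count_def redset_def)

lemma red_count_le: "red_count n s \<le> real n"
proof -
  have "card (redset n s) \<le> card {..<n}" by (rule card_mono) (auto simp: redset_def)
  then show ?thesis by (simp add: red_count_redset)
qed

lemma red_count_nonneg: "0 \<le> red_count n s" by (simp add: red_count_def)

lemma red_count_abs: "\<bar>red_count n s\<bar> \<le> real n"
  using red_count_le red_count_nonneg by (simp add: abs_le_iff)

definition G :: "nat \<Rightarrow> (nat \<times> nat) set \<Rightarrow> state \<Rightarrow> nat \<Rightarrow> nat set \<Rightarrow> real" where
  "G n E S t A = measure_pmf.expectation (picks n E t) (\<lambda>ps. red_count n (runD n E ps (recolor S A)))"

lemma G_tendsto: "(\<lambda>t. G n E S t A) \<longlonglongrightarrow> F n E S A"
  using expect_final_tendsto[of n E "recolor S A" "red_count n"]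
  unfolding F_def G_def run_picks by simp

lemma intG: "integrable (measure_pmf (picks n E t)) (\<lambda>ps. red_count n (runD n E ps (recolor S A)))"
  by (rule int_bounded[OF red_count_abs])

lemma F_mono: "X \<subseteq> Y \<Longrightarrow> F n E S X \<le> F n E S Y"
proof -
  assume XY: "X \<subseteq> Y"
  have "G n E S t X \<le> G n E S t Y" for t
    unfolding G_def
  proof (rule integral_mono[OF intG intG])
    fix ps
    have "monoR (runD n E ps (recolor S X)) (runD n E ps (recolor S Y))"
      by (rule monoR_run[OF monoR_recolor[OF XY]])
    then have "redset n (runD n E ps (recolor S X)) \<subseteq> redset n (runD n E ps (recolor S Y))"
      by (auto simp: monoR_def redset_def)
    then show "red_count n (runD n E ps (recolor S X)) \<le> red_count n (runD n E ps (recolor S Y))"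
      unfolding red_count_redset by (simp add: card_mono redset_def)
  qed
  then show ?thesis using LIMSEQ_le[OF G_tendsto G_tendsto] by blast
qed

lemma submod_pointwise:
  "red_count n (runD n E ps (recolor S (X \<union> Y))) + red_count n (runD n E ps (recolor S (X \<inter> Y)))
   \<le> red_count n (runD n E ps (recolor S X)) + red_count n (runD n E ps (recolor S Y))"
proof -
    define a where "a = runD n E ps (recolor S X)"
    define b where "b = runD n E ps (recolor S Y)"
    define c where "c = runD n E ps (recolor S (X \<union> Y))"
    define d where "d = runD n E ps (recolor S (X \<inter> Y))"
    have u: "unionR a b c" unfolding a_def b_def c_def by (rule unionR_run[OF unionR_recolor])
    have m1: "monoR d a" unfolding a_def d_def by (rule monoR_run[OF monoR_recolor]) auto
    have m2: "monoR d b" unfolding b_def d_def by (rule monoR_run[OF monoR_recolor]) auto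
    have s1: "redset n c \<subseteq> redset n a \<union> redset n b"
      using u unfolding unionR_def redset_def by blast
    have s2: "redset n d \<subseteq> redset n a \<inter> redset n b"
      using m1 m2 unfolding monoR_def redset_def by blast
    have fin: "finite (redset n s)" for s by (simp add: redset_def)
    have "card (redset n c) + card (redset n d) \<le> card (redset n a \<union> redset n b) + card (redset n a \<inter> redset n b)"
      using card_mono[OF _ s1] card_mono[OF _ s2] fin by (meson add_mono finite_Int finite_UnI)
    also have "\<dots> = card (redset n a) + card (redset n b)"
      by (rule card_Un_Int[OF fin fin, symmetric])
    finally have "real (card (redset n c)) + real (card (redset n d)) \<le> real (card (redset n a)) + real (card (redset n b))"
      by linarith
    then show ?thesis
      unfolding red_count_redset a_def b_def c_def d_def .
qed

lemma F_submod: "F n E S (X \<union> Y) + F n E S (X \<inter> Y) \<le> F n E S X + F n E S Y"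
proof -
  have "G n E S t (X \<union> Y) + G n E S t (X \<inter> Y) \<le> G n E S t X + G n E S t Y" for t
  proof -
    have "G n E S t (X \<union> Y) + G n E S t (X \<inter> Y) = measure_pmf.expectation (picks n E t)
       (\<lambda>ps. red_count n (runD n E ps (recolor S (X \<union> Y))) + red_count n (runD n E ps (recolor S (X \<inter> Y))))"
      unfolding G_def by (rule Bochner_Integration.integral_add[symmetric, OF intG intG])
    also have "\<dots> \<le> measure_pmf.expectation (picks n E t)
       (\<lambda>ps. red_count n (runD n E ps (recolor S X)) + red_count n (runD n E ps (recolor S Y)))"
      by (rule integral_mono[OF Bochner_Integration.integrable_add[OF intG intG] Bochner_Integration.integrable_add[OF intG intG] submod_pointwise])
    also have "\<dots> = G n E S t X + G n E S t Y"
      unfolding G_def by (rule Bochner_Integration.integral_add[OF intG intG])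
    finally show ?thesis .
  qed
  then show ?thesis
    using LIMSEQ_le[OF tendsto_add[OF G_tendsto G_tendsto] tendsto_add[OF G_tendsto G_tendsto]] by blast
qed

lemma F_ge_card: "A \<subseteq> {..<n} \<Longrightarrow> real (card A) \<le> F n E S A"
proof -
  assume A: "A \<subseteq> {..<n}"
  have "real (card A) \<le> G n E S t A" for t
    unfolding G_def
  proof (rule measure_pmf.integral_ge_const[OF intG], rule AE_pmfI)
    fix ps
    have "A \<subseteq> redset n (runD n E ps (recolor S A))"
      using A by (auto simp: redset_def runD_red recolor_def)
    then show "real (card A) \<le> red_count n (runD n E ps (recolor S A))"
      unfolding red_count_redset by (simp add: card_mono redset_def)
  qed
  then show ?thesis using LIMSEQ_le_const[OF G_tendsto] by blast
qed

lemma F_le: "F n E S A \<le> real n"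
  unfolding F_def by (rule measure_pmf.integral_le_const[OF int_bounded[OF red_count_abs]]) (auto intro: red_count_le)

lemma F_nonneg: "0 \<le> F n E S A"
  unfolding F_def by (rule Bochner_Integration.integral_nonneg) (simp add: red_count_nonneg)

lemma exp_le_quad:
  fixes y :: real assumes "\<bar>y\<bar> \<le> 1" shows "exp y \<le> 1 + y + y\<^sup>2"
proof (cases "0 \<le> y")
  case True then show ?thesis using exp_bound assms by auto
next
  case False
  define z where "z = - y"
  have z: "0 \<le> z" "z \<le> 1" using False assms by (auto simp: z_def)
  have "exp y = inverse (exp z)" by (simp add: z_def exp_minus)
  also have "\<dots> \<le> inverse (1 + z)"
    using z by (intro le_imp_inverse_le exp_ge_add_one_self) auto
  also have "\<dots> \<le> 1 - z + z\<^sup>2"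
  proof -
    have "1 \<le> (1 + z) * (1 - z + z\<^sup>2)" using z by (simp add: algebra_simps power2_eq_square power3_eq_cube)
    then show ?thesis using z by (simp add: field_simps)
  qed
  finally show ?thesis by (simp add: z_def)
qed

lemma mgf_bound:
  fixes P :: "'a pmf" and X :: "'a \<Rightarrow> real"
  assumes X: "\<And>x. 0 \<le> X x" "\<And>x. X x \<le> m" and c: "\<bar>c\<bar> * m \<le> 1"
  shows "measure_pmf.expectation P (\<lambda>x. exp (c * X x)) \<le> exp (c * measure_pmf.expectation P X + c\<^sup>2 * m * measure_pmf.expectation P X)"
proof -
  have m: "0 \<le> m" using X order_trans by blast
  have iX: "integrable (measure_pmf P) X"
    by (rule int_bounded[where B=m]) (use X in auto)
  have iX2: "integrable (measure_pmf P) (\<lambda>x. 1 + c * X x + c\<^sup>2 * m * X x)"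
    using iX by auto
  have ie: "integrable (measure_pmf P) (\<lambda>x. exp (c * X x))"
  proof (rule int_bounded[where B="exp (\<bar>c\<bar> * m)"])
    fix x
    have "c * X x \<le> \<bar>c\<bar> * m" using X[of x] by (metis abs_ge_self abs_mult abs_of_nonneg mult_mono' abs_ge_zero order_trans)
    then show "\<bar>exp (c * X x)\<bar> \<le> exp (\<bar>c\<bar> * m)" by simp
  qed
  have "measure_pmf.expectation P (\<lambda>x. exp (c * X x)) \<le> measure_pmf.expectation P (\<lambda>x. 1 + c * X x + c\<^sup>2 * m * X x)"
  proof (rule integral_mono[OF ie iX2])
    fix x
    have cx: "\<bar>c * X x\<bar> \<le> 1"
      using X[of x] c m by (simp add: abs_mult) (metis abs_ge_zero mult_left_mono order_trans)
    have "exp (c * X x) \<le> 1 + c * X x + (c * X x)\<^sup>2" by (rule exp_le_quad[OF cx])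
    also have "(c * X x)\<^sup>2 \<le> c\<^sup>2 * m * X x"
    proof -
      have "(c * X x)\<^sup>2 = c\<^sup>2 * (X x * X x)" by (simp add: power2_eq_square)
      also have "\<dots> \<le> c\<^sup>2 * (m * X x)" by (intro mult_left_mono mult_right_mono) (use X[of x] in auto)
      finally show ?thesis by (simp add: mult.assoc)
    qed
    finally show "exp (c * X x) \<le> 1 + c * X x + c\<^sup>2 * m * X x" by simp
  qed
  also have "\<dots> = 1 + (c * measure_pmf.expectation P X + c\<^sup>2 * m * measure_pmf.expectation P X)"
    using iX by simp
  also have "\<dots> \<le> exp (c * measure_pmf.expectation P X + c\<^sup>2 * m * measure_pmf.expectation P X)"
    by (rule exp_ge_add_one_self)
  finally show ?thesis .
qed

lemma tail_bound:
  fixes P :: "'a pmf" and X :: "'a \<Rightarrow> real"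
  assumes X: "\<And>x. 0 \<le> X x" "\<And>x. X x \<le> m" and c: "\<bar>c\<bar> * m \<le> 1"
  defines "\<mu> \<equiv> measure_pmf.expectation P X"
  shows "measure_pmf.prob (Pi_pmf {..<R} d (\<lambda>_. P)) {xs. c * (\<Sum>i<R. X (xs i)) \<ge> c * a}
     \<le> exp (real R * (c * \<mu> + c\<^sup>2 * m * \<mu>) - c * a)"
proof -
  let ?Q = "Pi_pmf {..<R} d (\<lambda>_. P)"
  let ?u = "\<lambda>xs. exp (c * (\<Sum>i<R. X (xs i)))"
  have m: "0 \<le> m" using X order_trans by blast
  have ie: "integrable (measure_pmf P) (\<lambda>x. exp (c * X x))"
  proof (rule int_bounded[where B="exp (\<bar>c\<bar> * m)"])
    fix x
    have "c * X x \<le> \<bar>c\<bar> * m" using X[of x] by (metis abs_ge_self abs_mult abs_of_nonneg mult_mono' abs_ge_zero order_trans)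
    then show "\<bar>exp (c * X x)\<bar> \<le> exp (\<bar>c\<bar> * m)" by simp
  qed
  have u_eq: "?u xs = (\<Prod>i<R. exp (c * X (xs i)))" for xs
    by (simp add: sum_distrib_left exp_sum)
  have Eu: "measure_pmf.expectation ?Q ?u = (\<Prod>i<R. measure_pmf.expectation P (\<lambda>x. exp (c * X x)))"
    unfolding u_eq by (rule expectation_prod_Pi_pmf) (use ie in auto)
  also have "\<dots> \<le> (\<Prod>i<R. exp (c * \<mu> + c\<^sup>2 * m * \<mu>))"
    by (rule prod_mono) (use mgf_bound[OF X c] in \<open>auto simp: \<mu>_def intro: Bochner_Integration.integral_nonneg\<close>)
  also have "\<dots> = exp (real R * (c * \<mu> + c\<^sup>2 * m * \<mu>))"
    by (simp add: exp_of_nat_mult[symmetric])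
  finally have Eu_le: "measure_pmf.expectation ?Q ?u \<le> exp (real R * (c * \<mu> + c\<^sup>2 * m * \<mu>))" .
  have iu: "integrable (measure_pmf ?Q) ?u"
    unfolding u_eq by (rule integrable_prod_Pi_pmf) (use ie in auto)
  have "{xs. c * (\<Sum>i<R. X (xs i)) \<ge> c * a} = {xs \<in> space (measure_pmf ?Q). ?u xs \<ge> exp (c * a)}"
    by auto
  then have "measure_pmf.prob ?Q {xs. c * (\<Sum>i<R. X (xs i)) \<ge> c * a} \<le> measure_pmf.expectation ?Q ?u / exp (c * a)"
    using integral_Markov_inequality_measure[OF iu, of UNIV "exp (c * a)"] by auto
  also have "\<dots> \<le> exp (real R * (c * \<mu> + c\<^sup>2 * m * \<mu>)) / exp (c * a)"
    by (intro divide_right_mono Eu_le) auto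
  also have "\<dots> = exp (real R * (c * \<mu> + c\<^sup>2 * m * \<mu>) - c * a)"
    by (simp add: exp_diff)
  finally show ?thesis .
qed

lemma chernoff:
  fixes P :: "'a pmf" and X :: "'a \<Rightarrow> real"
  assumes X: "\<And>x. 0 \<le> X x" "\<And>x. X x \<le> m" and m: "0 < m" and \<delta>: "0 < \<delta>" "\<delta> \<le> 1" and R: "0 < R"
  defines "\<mu> \<equiv> measure_pmf.expectation P X"
  shows "measure_pmf.prob (map_pmf (\<lambda>xs. (\<Sum>i<R. X (xs i)) / real R) (Pi_pmf {..<R} d (\<lambda>_. P)))
            {e. \<bar>e - \<mu>\<bar> > \<delta> * \<mu>} \<le> 2 * exp (- (real R * \<mu> * \<delta>\<^sup>2 / (4 * m)))"
proof -
  let ?Q = "Pi_pmf {..<R} d (\<lambda>_. P)"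
  let ?Z = "\<lambda>xs. \<Sum>i<R. X (xs i)"
  define c where "c = \<delta> / (2 * m)"
  have c: "\<bar>c\<bar> * m \<le> 1" "\<bar>-c\<bar> * m \<le> 1" "0 < c" using m \<delta> by (auto simp: c_def)
  have sub: "(\<lambda>xs. ?Z xs / real R) -` {e. \<bar>e - \<mu>\<bar> > \<delta> * \<mu>} \<subseteq>
      {xs. c * ?Z xs \<ge> c * (real R * (1 + \<delta>) * \<mu>)} \<union> {xs. (-c) * ?Z xs \<ge> (-c) * (real R * (1 - \<delta>) * \<mu>)}"
  proof
    fix xs assume "xs \<in> (\<lambda>xs. ?Z xs / real R) -` {e. \<bar>e - \<mu>\<bar> > \<delta> * \<mu>}"
    then have h: "\<bar>?Z xs / real R - \<mu>\<bar> > \<delta> * \<mu>" by simp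
    have Rp: "0 < real R" using R by simp
    show "xs \<in> {xs. c * ?Z xs \<ge> c * (real R * (1 + \<delta>) * \<mu>)} \<union> {xs. (-c) * ?Z xs \<ge> (-c) * (real R * (1 - \<delta>) * \<mu>)}"
    proof (cases "?Z xs / real R \<ge> \<mu>")
      case True
      then have "?Z xs / real R > \<mu> + \<delta> * \<mu>" using h by simp
      then have "?Z xs > real R * (1 + \<delta>) * \<mu>" using Rp by (simp add: field_simps)
      then show ?thesis using c by simp
    next
      case False
      then have "?Z xs / real R < \<mu> - \<delta> * \<mu>" using h by simp
      then have "?Z xs < real R * (1 - \<delta>) * \<mu>" using Rp by (simp add: field_simps)
      then show ?thesis using c by simp
    qed
  qed
  have e1: "real R * (c * \<mu> + c\<^sup>2 * m * \<mu>) - c * (real R * (1 + \<delta>) * \<mu>) = - (real R * \<mu> * \<delta>\<^sup>2 / (4 * m))"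
    using m by (simp add: c_def field_simps power2_eq_square)
  have e2: "real R * ((-c) * \<mu> + (-c)\<^sup>2 * m * \<mu>) - (-c) * (real R * (1 - \<delta>) * \<mu>) = - (real R * \<mu> * \<delta>\<^sup>2 / (4 * m))"
    using m by (simp add: c_def field_simps power2_eq_square)
  have "measure_pmf.prob (map_pmf (\<lambda>xs. ?Z xs / real R) ?Q) {e. \<bar>e - \<mu>\<bar> > \<delta> * \<mu>}
      = measure_pmf.prob ?Q ((\<lambda>xs. ?Z xs / real R) -` {e. \<bar>e - \<mu>\<bar> > \<delta> * \<mu>})" by simp
  also have "\<dots> \<le> measure_pmf.prob ?Q ({xs. c * ?Z xs \<ge> c * (real R * (1 + \<delta>) * \<mu>)} \<union> {xs. (-c) * ?Z xs \<ge> (-c) * (real R * (1 - \<delta>) * \<mu>)})"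
    by (rule measure_pmf.finite_measure_mono[OF sub]) simp
  also have "\<dots> \<le> measure_pmf.prob ?Q {xs. c * ?Z xs \<ge> c * (real R * (1 + \<delta>) * \<mu>)} + measure_pmf.prob ?Q {xs. (-c) * ?Z xs \<ge> (-c) * (real R * (1 - \<delta>) * \<mu>)}"
    by (rule measure_Un_le) auto
  also have "\<dots> \<le> exp (- (real R * \<mu> * \<delta>\<^sup>2 / (4 * m))) + exp (- (real R * \<mu> * \<delta>\<^sup>2 / (4 * m)))"
  proof (rule add_mono)
    show "measure_pmf.prob ?Q {xs. c * ?Z xs \<ge> c * (real R * (1 + \<delta>) * \<mu>)} \<le> exp (- (real R * \<mu> * \<delta>\<^sup>2 / (4 * m)))"
      using tail_bound[where X=X and m=m and c=c and P=P and R=R and d=d and a="real R * (1 + \<delta>) * \<mu>", OF X c(1)]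
      unfolding \<mu>_def e1[unfolded \<mu>_def] .
    show "measure_pmf.prob ?Q {xs. (-c) * ?Z xs \<ge> (-c) * (real R * (1 - \<delta>) * \<mu>)} \<le> exp (- (real R * \<mu> * \<delta>\<^sup>2 / (4 * m)))"
      using tail_bound[where X=X and m=m and c="-c" and P=P and R=R and d=d and a="real R * (1 - \<delta>) * \<mu>", OF X c(2)]
      unfolding \<mu>_def e2[unfolded \<mu>_def] .
  qed
  finally show ?thesis by simp
qed

definition adm :: "nat \<Rightarrow> state \<Rightarrow> nat \<Rightarrow> nat set \<Rightarrow> bool" where
  "adm n S k X = (X \<subseteq> {..<n} \<and> card X \<le> k \<and> X \<inter> blue_set n S = {})"

lemma OPT_fam: "{F n E S A' | A'. A' \<subseteq> {..<n} \<and> card A' \<le> k \<and> A' \<inter> blue_set n S = {}} = F n E S ` {X. adm n S k X}"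
  by (auto simp: adm_def)

lemma adm_fin: "finite {X. adm n S k X}"
  by (rule finite_subset[of _ "Pow {..<n}"]) (auto simp: adm_def)

lemma OPT_ge: "adm n S k X \<Longrightarrow> F n E S X \<le> OPT n E S k"
  unfolding OPT_def OPT_fam by (rule Max_ge) (auto intro: adm_fin)

lemma OPT_att: "\<exists>Ob. adm n S k Ob \<and> F n E S Ob = OPT n E S k"
proof -
  have "adm n S k {}" by (simp add: adm_def)
  then have "OPT n E S k \<in> F n E S ` {X. adm n S k X}"
    unfolding OPT_def OPT_fam by (intro Max_in) (auto intro: adm_fin finite_imageI)
  then show ?thesis by auto
qed

lemma OPT_nonneg: "0 \<le> OPT n E S k"
  using OPT_ge[of n S k "{}" E] F_nonneg[of n E S "{}"] by (simp add: adm_def)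

lemma submod_sum:
  assumes "finite T"
  shows "F n E S (A \<union> T) - F n E S A \<le> (\<Sum>u\<in>T. F n E S (insert u A) - F n E S A)"
  using assms
proof (induction T rule: finite_induct)
  case empty then show ?case by simp
next
  case (insert u T)
  have sm: "F n E S ((A \<union> T) \<union> insert u A) + F n E S ((A \<union> T) \<inter> insert u A) \<le> F n E S (A \<union> T) + F n E S (insert u A)"
    by (rule F_submod)
  have mo: "F n E S A \<le> F n E S ((A \<union> T) \<inter> insert u A)" by (rule F_mono) auto
  have eq: "(A \<union> T) \<union> insert u A = A \<union> insert u T" by auto
  show ?case using insert sm mo unfolding eq by simp
qed

lemma greedy_det:
  fixes \<delta> :: real
  assumes k: "1 \<le> k" and A: "A \<subseteq> {..<n} - blue_set n S" "card A < k" "finite A"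
    and v: "v \<in> ({..<n} - blue_set n S) - A"
    and apx: "\<And>w. w \<in> ({..<n} - blue_set n S) - A \<Longrightarrow> \<bar>e w - F n E S (A \<union> {w})\<bar> \<le> \<delta> * F n E S (A \<union> {w})"
    and mx: "\<And>w. w \<in> ({..<n} - blue_set n S) - A \<Longrightarrow> e w \<le> e v"
    and \<delta>: "0 \<le> \<delta>"
  shows "OPT n E S k - F n E S (A \<union> {v}) \<le> (1 - 1 / real k) * (OPT n E S k - F n E S A) + 2 * \<delta> * OPT n E S k"
proof -
  let ?F = "F n E S" and ?O = "OPT n E S k"
  define D where "D = ({..<n} - blue_set n S) - A"
  have finD: "finite D" by (simp add: D_def)
  have vD: "v \<in> D" using v by (simp add: D_def)
  have admw: "adm n S k (A \<union> {w})" if "w \<in> D" for w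
  proof -
    have "card (A \<union> {w}) \<le> card A + 1" using A(3) by (simp add: card_insert_if)
    then show ?thesis using that A unfolding adm_def D_def by auto
  qed
  obtain ws where ws: "ws \<in> D" "\<And>w. w \<in> D \<Longrightarrow> ?F (A \<union> {w}) \<le> ?F (A \<union> {ws})"
  proof -
    let ?g = "\<lambda>w. ?F (A \<union> {w})"
    have "Max (?g ` D) \<in> ?g ` D" using finD vD by (intro Max_in) auto
    then obtain ws where "ws \<in> D" "?g ws = Max (?g ` D)" by auto
    moreover have "?g w \<le> Max (?g ` D)" if "w \<in> D" for w using finD that by (intro Max_ge) auto
    ultimately show ?thesis using that by metis
  qed
  have F_ws: "?F (A \<union> {ws}) \<le> ?O" using OPT_ge[OF admw[OF ws(1)]] .
  have F_v: "?F (A \<union> {v}) \<le> ?O" using OPT_ge[OF admw[OF vD]] .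
  have a1: "e v \<le> (1 + \<delta>) * ?F (A \<union> {v})" using apx[of v] v by (simp add: abs_le_iff algebra_simps)
  have a2: "(1 - \<delta>) * ?F (A \<union> {ws}) \<le> e ws" using apx[of ws] ws(1) by (simp add: D_def abs_le_iff algebra_simps)
  have a3: "e ws \<le> e v" using mx[of ws] ws(1) by (simp add: D_def)
  have close: "?F (A \<union> {v}) \<ge> ?F (A \<union> {ws}) - 2 * \<delta> * ?O"
  proof -
    have "?F (A \<union> {ws}) - ?F (A \<union> {v}) \<le> \<delta> * (?F (A \<union> {v}) + ?F (A \<union> {ws}))"
      using a1 a2 a3 by (simp add: algebra_simps)
    also have "\<dots> \<le> \<delta> * (?O + ?O)" using F_ws F_v \<delta> by (intro mult_left_mono) auto
    finally show ?thesis by simp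
  qed
  obtain Ob where Ob: "adm n S k Ob" "?F Ob = ?O" using OPT_att by blast
  define T where "T = Ob - A"
  have TD: "T \<subseteq> D" using Ob(1) by (auto simp: T_def D_def adm_def blue_set_def)
  have finT: "finite T" using finD TD finite_subset by blast
  have cardT: "card T \<le> k"
  proof -
    have "finite Ob" using Ob(1) finite_subset by (auto simp: adm_def)
    then have "card T \<le> card Ob" unfolding T_def by (rule card_mono) auto
    then show ?thesis using Ob(1) by (simp add: adm_def)
  qed
  have gain_nonneg: "0 \<le> ?F (A \<union> {ws}) - ?F A" using F_mono[of A "A \<union> {ws}"] by auto
  have "?O - ?F A \<le> ?F (A \<union> T) - ?F A"
    using F_mono[of Ob "A \<union> T" n E S] Ob(2) by (auto simp: T_def)
  also have "\<dots> \<le> (\<Sum>u\<in>T. ?F (insert u A) - ?F A)" by (rule submod_sum[OF finT])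
  also have "\<dots> \<le> (\<Sum>u\<in>T. ?F (A \<union> {ws}) - ?F A)"
    by (rule sum_mono) (use ws(2) TD in auto)
  also have "\<dots> = real (card T) * (?F (A \<union> {ws}) - ?F A)" by simp
  also have "\<dots> \<le> real k * (?F (A \<union> {ws}) - ?F A)"
    using cardT gain_nonneg by (intro mult_right_mono) auto
  finally have key: "?O - ?F A \<le> real k * (?F (A \<union> {ws}) - ?F A)" .
  have kp: "0 < real k" using k by simp
  from key have "(?O - ?F A) / real k \<le> ?F (A \<union> {ws}) - ?F A"
    using kp by (simp add: field_simps)
  then have "?O - ?F (A \<union> {v}) \<le> (?O - ?F A) - (?O - ?F A) / real k + 2 * \<delta> * ?O"
    using close by linarith
  also have "(?O - ?F A) - (?O - ?F A) / real k = (1 - 1 / real k) * (?O - ?F A)"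
    by (simp add: algebra_simps diff_divide_distrib)
  finally show ?thesis .
qed

lemma prob_bind_ge:
  assumes q: "0 \<le> q" and h: "\<And>x. x \<in> set_pmf M \<Longrightarrow> x \<in> V \<Longrightarrow> measure_pmf.prob (f x) U \<ge> 1 - q"
  shows "measure_pmf.prob (bind_pmf M f) U \<ge> measure_pmf.prob M V - q"
proof -
  have "emeasure (measure_pmf (bind_pmf M f)) (-U) = (\<integral>\<^sup>+x. emeasure (f x) (-U) \<partial>M)" by simp
  also have "\<dots> \<le> (\<integral>\<^sup>+x. ennreal (indicator (-V) x + q) \<partial>M)"
  proof (rule nn_integral_mono_AE, rule AE_pmfI)
    fix x assume x: "x \<in> set_pmf M"
    have c: "measure_pmf.prob (f x) (-U) = 1 - measure_pmf.prob (f x) U"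
      using measure_pmf.prob_compl[of U "f x"] by (simp add: Compl_eq_Diff_UNIV)
    have "measure_pmf.prob (f x) (-U) \<le> indicator (-V) x + q"
    proof (cases "x \<in> V")
      case True then show ?thesis using h[OF x True] c by simp
    next
      case False
      have "measure_pmf.prob (f x) (-U) \<le> 1" by (rule measure_pmf.prob_le_1)
      moreover have "indicator (-V) x = (1::real)" using False by simp
      ultimately show ?thesis using q by linarith
    qed
    then show "emeasure (measure_pmf (f x)) (-U) \<le> ennreal (indicator (-V) x + q)"
      by (simp add: measure_pmf.emeasure_eq_measure ennreal_leI)
  qed
  also have "\<dots> = ennreal (\<integral>x. indicator (-V) x + q \<partial>M)"
    by (rule nn_integral_eq_integral) (use q in \<open>auto intro!: int_bounded[where B="1 + q"] split: split_indicator\<close>)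
  also have "(\<integral>x. indicator (-V) x + q \<partial>M) = measure_pmf.prob M (-V) + q"
    by (subst Bochner_Integration.integral_add) (auto intro!: int_bounded[where B=1] split: split_indicator)
  finally have "ennreal (measure_pmf.prob (bind_pmf M f) (-U)) \<le> ennreal (measure_pmf.prob M (-V) + q)"
    by (simp only: measure_pmf.emeasure_eq_measure)
  then have "measure_pmf.prob (bind_pmf M f) (-U) \<le> measure_pmf.prob M (-V) + q"
    using q by (subst (asm) ennreal_le_iff) (auto intro: add_nonneg_nonneg measure_nonneg)
  moreover have "measure_pmf.prob (bind_pmf M f) (-U) = 1 - measure_pmf.prob (bind_pmf M f) U"
    using measure_pmf.prob_compl[of U "bind_pmf M f"] by (simp add: Compl_eq_Diff_UNIV)
  moreover have "measure_pmf.prob M (-V) = 1 - measure_pmf.prob M V"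
    using measure_pmf.prob_compl[of V M] by (simp add: Compl_eq_Diff_UNIV)
  ultimately show ?thesis by simp
qed

lemma est_bound:
  assumes n: "0 < n" and R: "0 < R" and B: "B \<subseteq> {..<n}" "B \<noteq> {}" and \<delta>: "0 < \<delta>" "\<delta> \<le> 1"
  shows "measure_pmf.prob (est_pmf n E S R B) {e. \<bar>e - F n E S B\<bar> > \<delta> * F n E S B}
     \<le> 2 * exp (- (real R * \<delta>\<^sup>2 / (4 * real n)))"
proof -
  have "measure_pmf.prob (est_pmf n E S R B) {e. \<bar>e - F n E S B\<bar> > \<delta> * F n E S B}
     \<le> 2 * exp (- (real R * F n E S B * \<delta>\<^sup>2 / (4 * real n)))"
    unfolding est_pmf_def F_def
    by (rule chernoff[where X="red_count n" and m="real n"]) (use n R \<delta> in \<open>auto simp: red_count_nonneg red_count_le\<close>)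
  also have "\<dots> \<le> 2 * exp (- (real R * \<delta>\<^sup>2 / (4 * real n)))"
  proof -
    have "finite B" using B finite_subset by blast
    then have "1 \<le> real (card B)" using B(2) by (simp add: Suc_leI card_gt_0_iff)
    then have F1: "1 \<le> F n E S B" using F_ge_card[OF B(1), of E S] by linarith
    have "real R * \<delta>\<^sup>2 / (4 * real n) \<le> real R * F n E S B * \<delta>\<^sup>2 / (4 * real n)"
    proof -
      have "\<delta>\<^sup>2 \<le> F n E S B * \<delta>\<^sup>2" using F1 by (simp add: mult_le_cancel_right1)
      then have "real R * \<delta>\<^sup>2 \<le> real R * (F n E S B * \<delta>\<^sup>2)" by (intro mult_left_mono) auto
      then show ?thesis using n by (intro divide_right_mono) (auto simp: mult.assoc)
    qed
    then show ?thesis by simp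
  qed
  finally show ?thesis .
qed

definition Jinv :: "nat \<Rightarrow> (nat \<times> nat) set \<Rightarrow> state \<Rightarrow> nat \<Rightarrow> real \<Rightarrow> nat \<Rightarrow> nat set \<Rightarrow> bool" where
  "Jinv n E S k \<delta> i A = (A \<subseteq> {..<n} - blue_set n S \<and> card A = i \<and>
     OPT n E S k - F n E S A \<le> ((1 - 1 / real k) ^ i + 2 * \<delta> * real i) * OPT n E S k)"

lemma Jinv_step_arith:
  fixes a X Ob d i :: real
  assumes a: "0 \<le> a" "a \<le> 1" and Ob: "0 \<le> Ob" and d: "0 \<le> d" and i: "0 \<le> i"
    and X: "X \<le> (a ^ j + 2 * d * i) * Ob"
    and Y: "Y \<le> a * X + 2 * d * Ob"
  shows "Y \<le> (a ^ Suc j + 2 * d * (i + 1)) * Ob"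
proof -
  have "a * X \<le> a * ((a ^ j + 2 * d * i) * Ob)" using X a by (intro mult_left_mono) auto
  also have "\<dots> = a ^ Suc j * Ob + a * (2 * d * i * Ob)" by (simp add: algebra_simps)
  also have "\<dots> \<le> a ^ Suc j * Ob + 2 * d * i * Ob"
  proof -
    have "0 \<le> 2 * d * i * Ob" using d i Ob by simp
    then have "a * (2 * d * i * Ob) \<le> 1 * (2 * d * i * Ob)" using a by (intro mult_right_mono) auto
    then show ?thesis by simp
  qed
  finally show ?thesis using Y by (simp add: algebra_simps)
qed

lemma step_bound:
  fixes \<delta> p :: real
  assumes n: "0 < n" and R: "0 < R" and k: "1 \<le> k" and kC: "k \<le> card ({..<n} - blue_set n S)"
    and tb: "valid_tiebreak ({..<n} - blue_set n S) tb"
    and \<delta>: "0 < \<delta>" "\<delta> \<le> 1" and J: "Jinv n E S k \<delta> i A" and i: "i < k"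
    and p: "2 * exp (- (real R * \<delta>\<^sup>2 / (4 * real n))) \<le> p"
  shows "measure_pmf.prob (greedy_step n E S R tb A) {A'. Jinv n E S k \<delta> (Suc i) A'} \<ge> 1 - real n * p"
proof -
  define C where "C = {..<n} - blue_set n S"
  define D where "D = C - A"
  define Q where "Q = Pi_pmf D 0 (\<lambda>v. est_pmf n E S R (A \<union> {v}))"
  define h where "h = (\<lambda>e. A \<union> {tb A e})"
  define U where "U = {A'. Jinv n E S k \<delta> (Suc i) A'}"
  define Bad where "Bad = (\<lambda>v. {e::nat\<Rightarrow>real. \<bar>e v - F n E S (A \<union> {v})\<bar> > \<delta> * F n E S (A \<union> {v})})"
  define G where "G = {e::nat\<Rightarrow>real. \<forall>v\<in>D. \<bar>e v - F n E S (A \<union> {v})\<bar> \<le> \<delta> * F n E S (A \<union> {v})}"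
  have AC: "A \<subseteq> C" and cardA: "card A = i" and JA: "OPT n E S k - F n E S A \<le> ((1 - 1 / real k) ^ i + 2 * \<delta> * real i) * OPT n E S k"
    using J by (auto simp: Jinv_def C_def)
  have finC: "finite C" by (simp add: C_def)
  have finA: "finite A" using AC finC finite_subset by blast
  have finD: "finite D" using finC by (simp add: D_def)
  have DC: "D \<noteq> {}"
  proof
    assume "D = {}"
    then have "C \<subseteq> A" by (auto simp: D_def)
    then have "card C \<le> card A" using finA by (rule card_mono[rotated])
    then show False using kC i cardA by (simp add: C_def)
  qed
  have cardD: "card D \<le> n"
  proof -
    have "card D \<le> card {..<n}" by (rule card_mono) (auto simp: D_def C_def)
    then show ?thesis by simp
  qed
  have p0: "0 \<le> p" using p by (meson exp_ge_zero mult_nonneg_nonneg order_trans zero_le_numeral)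
  have bad: "measure_pmf.prob Q (Bad v) \<le> p" if v: "v \<in> D" for v
  proof -
    have "measure_pmf.prob Q (Bad v) = measure_pmf.prob (map_pmf (\<lambda>e. e v) Q) {x. \<bar>x - F n E S (A \<union> {v})\<bar> > \<delta> * F n E S (A \<union> {v})}"
      by (simp add: Bad_def vimage_def)
    also have "map_pmf (\<lambda>e. e v) Q = est_pmf n E S R (A \<union> {v})"
      unfolding Q_def using Pi_pmf_component[OF finD, of v 0] v by simp
    also have "measure_pmf.prob (est_pmf n E S R (A \<union> {v})) {x. \<bar>x - F n E S (A \<union> {v})\<bar> > \<delta> * F n E S (A \<union> {v})} \<le> 2 * exp (- (real R * \<delta>\<^sup>2 / (4 * real n)))"
      by (rule est_bound) (use n R \<delta> AC v in \<open>auto simp: C_def D_def\<close>)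
    finally show ?thesis using p by linarith
  qed
  have "measure_pmf.prob Q (-G) = measure_pmf.prob Q (\<Union>v\<in>D. Bad v)"
    by (rule arg_cong[where f="measure_pmf.prob Q"]) (auto simp: G_def Bad_def not_le)
  also have "\<dots> \<le> (\<Sum>v\<in>D. measure_pmf.prob Q (Bad v))"
    by (rule measure_UNION_le[OF finD]) auto
  also have "\<dots> \<le> (\<Sum>v\<in>D. p)" by (rule sum_mono[OF bad])
  also have "\<dots> = real (card D) * p" by simp
  also have "\<dots> \<le> real n * p" using cardD p0 by (intro mult_right_mono) auto
  finally have bG: "measure_pmf.prob Q (-G) \<le> real n * p" .
  have cG: "measure_pmf.prob Q (-G) = 1 - measure_pmf.prob Q G"
    using measure_pmf.prob_compl[of G Q] by (simp add: Compl_eq_Diff_UNIV)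
  have GU: "G \<subseteq> h -` U"
  proof
    fix e assume e: "e \<in> G"
    define v where "v = tb A e"
    have vD: "v \<in> D" and mx: "\<And>w. w \<in> D \<Longrightarrow> e w \<le> e v"
      using tb DC unfolding valid_tiebreak_def v_def D_def C_def by blast+
    have vA: "v \<notin> A" using vD by (simp add: D_def)
    have det: "OPT n E S k - F n E S (A \<union> {v}) \<le> (1 - 1 / real k) * (OPT n E S k - F n E S A) + 2 * \<delta> * OPT n E S k"
      by (rule greedy_det[where e=e]) (use k AC cardA i finA vD mx e \<delta> in \<open>auto simp: C_def D_def G_def\<close>)
    have ineq: "OPT n E S k - F n E S (A \<union> {v}) \<le> ((1 - 1 / real k) ^ Suc i + 2 * \<delta> * real (Suc i)) * OPT n E S k"
      using Jinv_step_arith[OF _ _ OPT_nonneg _ _ JA det] k \<delta> by (simp add: add.commute)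
    have "card (A \<union> {v}) = Suc i" using finA vA cardA by simp
    moreover have "A \<union> {v} \<subseteq> {..<n} - blue_set n S" using AC vD by (auto simp: C_def D_def)
    ultimately show "e \<in> h -` U" using ineq by (simp add: h_def U_def Jinv_def v_def)
  qed
  have "measure_pmf.prob (greedy_step n E S R tb A) U = measure_pmf.prob Q (h -` U)"
    by (simp add: greedy_step_def Q_def h_def C_def D_def)
  also have "\<dots> \<ge> measure_pmf.prob Q G" by (rule measure_pmf.finite_measure_mono[OF GU]) simp
  finally show ?thesis using bG cG by (simp add: U_def)
qed


lemma iter_bound:
  fixes \<delta> p :: real
  assumes n: "0 < n" and R: "0 < R" and k: "1 \<le> k" and kC: "k \<le> card ({..<n} - blue_set n S)"
    and tb: "valid_tiebreak ({..<n} - blue_set n S) tb"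
    and \<delta>: "0 < \<delta>" "\<delta> \<le> 1"
    and p: "2 * exp (- (real R * \<delta>\<^sup>2 / (4 * real n))) \<le> p"
  shows "i \<le> k \<Longrightarrow> measure_pmf.prob (((\<lambda>M. bind_pmf M (greedy_step n E S R tb)) ^^ i) (return_pmf {}))
            {A. Jinv n E S k \<delta> i A} \<ge> 1 - real i * (real n * p)"
proof (induction i)
  case 0
  have "Jinv n E S k \<delta> 0 {}"
    using F_nonneg[of n E S "{}"] OPT_nonneg[of n E S k] by (simp add: Jinv_def)
  then show ?case by simp
next
  case (Suc i)
  have p0: "0 \<le> p" using p by (meson exp_ge_zero mult_nonneg_nonneg order_trans zero_le_numeral)
  have "measure_pmf.prob (((\<lambda>M. bind_pmf M (greedy_step n E S R tb)) ^^ i) (return_pmf {})) {A. Jinv n E S k \<delta> i A} - real n * p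
     \<le> measure_pmf.prob (bind_pmf (((\<lambda>M. bind_pmf M (greedy_step n E S R tb)) ^^ i) (return_pmf {})) (greedy_step n E S R tb)) {A. Jinv n E S k \<delta> (Suc i) A}"
    by (rule prob_bind_ge) (use n p0 step_bound[OF n R k kC tb \<delta> _ _ p] Suc.prems in auto)
  then show ?case using Suc by (simp add: algebra_simps)
qed

lemma one_minus_pow_le: "1 \<le> k \<Longrightarrow> (1 - 1 / real k) ^ k \<le> exp (-1)"
proof -
  assume k: "1 \<le> k"
  have "(1 - 1 / real k) ^ k \<le> exp (- (1 / real k)) ^ k"
    using k exp_ge_add_one_self[of "- (1 / real k)"] by (intro power_mono) auto
  also have "\<dots> = exp (real k * (- (1 / real k)))" by (rule exp_of_nat_mult[symmetric])
  also have "\<dots> = exp (-1)" using k by simp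
  finally show ?thesis .
qed

theorem theorem2p3:
  fixes \<epsilon> :: real
  assumes "0 < \<epsilon>" and "\<epsilon> < 1"
  shows "\<exists>\<delta> :: nat \<Rightarrow> real. \<delta> \<longlonglongrightarrow> 0 \<and>
    (\<forall>n E S k tb.
       E \<subseteq> {..<n} \<times> {..<n} \<and>
       (\<forall>v<n. S v \<noteq> Red) \<and>
       1 \<le> k \<and> k \<le> card ({..<n} - blue_set n S) \<and>
       valid_tiebreak ({..<n} - blue_set n S) tb \<longrightarrow>
       measure_pmf.prob (greedy_pmf n E S k \<epsilon> tb)
         {A. F n E S A \<ge> (1 - 1 / exp 1 - \<epsilon>) * OPT n E S k} \<ge> 1 - \<delta> n)"
proof (intro exI conjI allI impI)
  show "(\<lambda>n. 2 / real n) \<longlonglongrightarrow> 0" by (rule lim_const_over_n)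
  fix n E S k tb
  assume H: "E \<subseteq> {..<n} \<times> {..<n} \<and> (\<forall>v<n. S v \<noteq> Red) \<and> 1 \<le> k \<and> k \<le> card ({..<n} - blue_set n S) \<and>
       valid_tiebreak ({..<n} - blue_set n S) tb"
  then have k: "1 \<le> k" and kC: "k \<le> card ({..<n} - blue_set n S)" and tb: "valid_tiebreak ({..<n} - blue_set n S) tb"
    by auto
  have kn: "k \<le> n"
  proof -
    have "card ({..<n} - blue_set n S) \<le> card {..<n}" by (rule card_mono) auto
    then show ?thesis using kC by simp
  qed
  let ?T = "{A. F n E S A \<ge> (1 - 1 / exp 1 - \<epsilon>) * OPT n E S k}"
  show "measure_pmf.prob (greedy_pmf n E S k \<epsilon> tb) ?T \<ge> 1 - 2 / real n"
  proof (cases "n \<ge> 2")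
    case False
    then have "n = 1" using kn k by linarith
    then have "1 - 2 / real n \<le> 0" by simp
    moreover have "0 \<le> measure_pmf.prob (greedy_pmf n E S k \<epsilon> tb) ?T" by (rule measure_nonneg)
    ultimately show ?thesis by linarith
  next
    case True
    have n: "0 < n" using True by simp
    define \<delta> where "\<delta> = \<epsilon> / (2 * real k)"
    define R where "R = num_sims n k \<epsilon>"
    define p where "p = 2 / real n ^ 5"
    have \<delta>: "0 < \<delta>" "\<delta> \<le> 1" using assms k by (auto simp: \<delta>_def field_simps)
    have lnn: "0 < ln (real n)" using True by simp
    have Rge: "real R \<ge> 81 * real n * real k ^ 2 * ln (real n) / \<epsilon> ^ 2"
    proof -
      have "real R \<ge> 27 * real n * real k ^ 2 * ln (real n ^ 3) / \<epsilon> ^ 2"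
        unfolding R_def num_sims_def by (rule real_nat_ceiling_ge)
      moreover have "ln (real n ^ 3) = 3 * ln (real n)" by (simp add: ln_realpow)
      ultimately show ?thesis by simp
    qed
    have R: "0 < R"
    proof -
      have "0 < 81 * real n * real k ^ 2 * ln (real n) / \<epsilon> ^ 2" using n k lnn assms by simp
      then show ?thesis using Rge by simp
    qed
    have expo: "5 * ln (real n) \<le> real R * \<delta>\<^sup>2 / (4 * real n)"
    proof -
      have "real R * \<delta>\<^sup>2 / (4 * real n) \<ge> (81 * real n * real k ^ 2 * ln (real n) / \<epsilon> ^ 2) * \<delta>\<^sup>2 / (4 * real n)"
        using Rge n by (intro divide_right_mono mult_right_mono) auto
      also have "(81 * real n * real k ^ 2 * ln (real n) / \<epsilon> ^ 2) * \<delta>\<^sup>2 / (4 * real n) = 81 / 16 * ln (real n)"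
        using n k assms by (simp add: \<delta>_def field_simps power2_eq_square)
      finally show ?thesis using lnn by linarith
    qed
    have p: "2 * exp (- (real R * \<delta>\<^sup>2 / (4 * real n))) \<le> p"
    proof -
      have "exp (- (real R * \<delta>\<^sup>2 / (4 * real n))) \<le> exp (- (real 5 * ln (real n)))"
        using expo by simp
      also have "\<dots> = inverse (exp (ln (real n)) ^ 5)"
        by (simp add: exp_minus exp_of_nat_mult del: of_nat_numeral)
      also have "\<dots> = 1 / real n ^ 5" using n by (simp add: divide_inverse)
      finally show ?thesis by (simp add: p_def)
    qed
    have main: "measure_pmf.prob (greedy_pmf n E S k \<epsilon> tb) {A. Jinv n E S k \<delta> k A} \<ge> 1 - real k * (real n * p)"
      unfolding greedy_pmf_def R_def[symmetric]
      by (rule iter_bound[OF n R k kC tb \<delta> p]) simp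
    have sub: "{A. Jinv n E S k \<delta> k A} \<subseteq> ?T"
    proof
      fix A assume "A \<in> {A. Jinv n E S k \<delta> k A}"
      then have J: "OPT n E S k - F n E S A \<le> ((1 - 1 / real k) ^ k + 2 * \<delta> * real k) * OPT n E S k"
        by (simp add: Jinv_def)
      have "2 * \<delta> * real k = \<epsilon>" using k by (simp add: \<delta>_def)
      then have "OPT n E S k - F n E S A \<le> ((1 - 1 / real k) ^ k + \<epsilon>) * OPT n E S k" using J by simp
      also have "\<dots> \<le> (exp (-1) + \<epsilon>) * OPT n E S k"
        using one_minus_pow_le[OF k] OPT_nonneg[of n E S k] by (intro mult_right_mono) auto
      finally have "F n E S A \<ge> (1 - exp (-1) - \<epsilon>) * OPT n E S k" by (simp add: algebra_simps)
      then show "A \<in> ?T" by (simp add: exp_minus divide_inverse)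
    qed
    have "real k * (real n * p) \<le> 2 / real n"
    proof -
      have "real k * (real n * p) = 2 * (real k * real n) / real n ^ 5" by (simp add: p_def)
      also have "\<dots> \<le> 2 * (real n * real n) / real n ^ 5"
        using kn n by (intro divide_right_mono mult_left_mono mult_right_mono) auto
      also have "\<dots> = 2 / real n ^ 3" using n by (simp add: power_def field_simps)
      also have "\<dots> \<le> 2 / real n"
      proof -
        have n1: "1 \<le> real n" using True by simp
        have "1 * 1 \<le> real n * real n" by (rule mult_mono[OF n1 n1]) auto
        then have "1 \<le> real n * real n" by simp
        then have "real n * 1 \<le> real n * (real n * real n)" using n by (intro mult_left_mono) auto
        then show ?thesis using n by (intro divide_left_mono) (auto simp: power3_eq_cube)
      qed
      finally show ?thesis .
    qed
    moreover have "measure_pmf.prob (greedy_pmf n E S k \<epsilon> tb) {A. Jinv n E S k \<delta> k A} \<le> measure_pmf.prob (greedy_pmf n E S k \<epsilon> tb) ?T"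
      by (rule measure_pmf.finite_measure_mono[OF sub]) simp
    ultimately show ?thesis using main by linarith
  qed
qed

end
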